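(* Let $\gamma>1$ and $a>0$, and set $v_{1,1}=a$, $v_{2,1}=\gamma a$. Then there exist $b>0$ and $\vartheta\in(-\pi,\pi]$ such that, with $w_{1,1}=w_{2,1}=b$, one has $2\omega_-(\vartheta)=\omega_+(2\vartheta)$.
   Context: With $c_i:=2v_{i,1}+w_{i,1}$, for $\vartheta\in\mathbb R$ define $$\omega_\pm(\vartheta):=\sqrt{\tfrac12\Big(c_1+c_2\pm\sqrt{(c_1-c_2)^2+8v_{1,1}v_{2,1}(\cos\vartheta+1)}\Big)}.$$ (In the stated setting $w_{i,1}>0$, $4v_{i,1}+w_{i,1}>0$, $v_{1,1}v_{2,1}>0$, $c_2>c_1$, so both branches are positive.) *)

theory Defs
  imports Complex_Main
begin

definition cc :: "real \<Rightarrow> real \<Rightarrow> real" where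
  "cc v w = 2 * v + w"

definition omega_plus :: "real \<Rightarrow> real \<Rightarrow> real \<Rightarrow> real \<Rightarrow> real \<Rightarrow> real" where
  "omega_plus v1 v2 w1 w2 \<theta> =
     sqrt ((cc v1 w1 + cc v2 w2
            + sqrt ((cc v1 w1 - cc v2 w2)^2 + 8 * v1 * v2 * (cos \<theta> + 1))) / 2)"

definition omega_minus :: "real \<Rightarrow> real \<Rightarrow> real \<Rightarrow> real \<Rightarrow> real \<Rightarrow> real" where
  "omega_minus v1 v2 w1 w2 \<theta> =
     sqrt ((cc v1 w1 + cc v2 w2
            - sqrt ((cc v1 w1 - cc v2 w2)^2 + 8 * v1 * v2 * (cos \<theta> + 1))) / 2)"

end

theory Submission
  imports Defs
begin

theorem mainTheorem2:
  fixes \<gamma> a :: real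
  assumes "\<gamma> > 1" and "a > 0"
  shows "\<exists>b \<theta>. b > 0 \<and> -pi < \<theta> \<and> \<theta> \<le> pi \<and>
           2 * omega_minus a (\<gamma> * a) b b \<theta> = omega_plus a (\<gamma> * a) b b (2 * \<theta>)"
proof -
  define b where "b = 2 * a * (1 + \<gamma>) / 3"
  have bpos: "b > 0" using assms unfolding b_def by simp
  have e: "(cc a b - cc (\<gamma> * a) b)^2 + 8 * a * (\<gamma> * a) * (cos 0 + 1) = (2 * a * (1 + \<gamma>))^2"
    unfolding cc_def by (simp add: power2_eq_square algebra_simps)
  have r: "sqrt ((cc a b - cc (\<gamma> * a) b)^2 + 8 * a * (\<gamma> * a) * (cos 0 + 1)) = 2 * a * (1 + \<gamma>)"
    using assms by (simp only: e real_sqrt_abs) simp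
  have m: "omega_minus a (\<gamma> * a) b b 0 = sqrt b"
    unfolding omega_minus_def r by (simp add: cc_def algebra_simps)
  have p: "omega_plus a (\<gamma> * a) b b (2 * 0) = sqrt (4 * b)"
    using r unfolding omega_plus_def by (simp add: cc_def b_def algebra_simps)
  have "sqrt (4 * b) = 2 * sqrt b" by (simp add: real_sqrt_mult)
  then show ?thesis using bpos m p
    by (intro exI[of _ b] exI[of _ 0]) simp
qed

end
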